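(* Let $n\in\mathbb{Z}_+$, $\mathbf{a}=(a_n,\dots,a_{2n})\in\mathbb{C}^{n+1}$, $\lambda\in\mathbb{C}^*$, $\alpha\in\mathbb{C}$ and $h\in\mathbb{C}[t]$. Let $\mathfrak{b}_{\lambda,n+1}=\mathrm{span}\{d_k-\lambda^{k-n}d_n\mid k\ge n+1\}\subseteq\mathrm{Vir}$, and let $\mathbb{C}[t]_{\alpha,h,\mathbf{a}}$ be $\mathbb{C}[t]$ with the $\mathfrak{b}_{\lambda,n+1}$-module structure $$(d_k-\lambda^{k-n}d_n)\circ f=(k-n)\lambda^k\big(G(f)-(k+n)\alpha F(f)\big)+(a_k-\lambda^{k-n}a_n)f,\qquad k\ge n+1,$$ where $a_k:=0$ for $k>2n$. Then $\mathbb{C}[t]_{\alpha,h,\mathbf{a}}$ is an irreducible $\mathfrak{b}_{\lambda,n+1}$-module if and only if $\alpha\neq0$ and $\deg(h)=1$.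
   Context: $\mathrm{Vir}$ is the Lie algebra with basis $\{d_i,c\mid i\in\mathbb{Z}\}$ and brackets $[d_i,d_j]=(j-i)d_{i+j}+\delta_{i,-j}\frac{i^3-i}{12}c$, $[c,d_i]=0$; $\mathfrak{b}_{\lambda,n+1}$ is a Lie subalgebra. For $\alpha\in\mathbb{C}$, $h\in\mathbb{C}[t]$, the operators on $\mathbb{C}[t]$ are $F(f)=\frac{h(t)-h(\alpha)}{t-\alpha}f(t)-f'(t)$ and $G(f)=h(\alpha)f+tF(f)$. *)

theory Defs
  imports "HOL-Computational_Algebra.Polynomial"
begin

text \<open>The operators F and G on C[t]. The quotient (h(t) - h(alpha))/(t - alpha)
  is an exact polynomial division.\<close>

definition opF :: "complex \<Rightarrow> complex poly \<Rightarrow> complex poly \<Rightarrow> complex poly" where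
  "opF \<alpha> h f = ((h - [:poly h \<alpha>:]) div [:-\<alpha>, 1:]) * f - pderiv f"

definition opG :: "complex \<Rightarrow> complex poly \<Rightarrow> complex poly \<Rightarrow> complex poly" where
  "opG \<alpha> h f = smult (poly h \<alpha>) f + [:0, 1:] * opF \<alpha> h f"

definition coef_ext :: "nat \<Rightarrow> (nat \<Rightarrow> complex) \<Rightarrow> nat \<Rightarrow> complex" where
  "coef_ext n a k = (if k \<le> 2 * n then a k else 0)"

text \<open>Action of the spanning element d_k - lambda^(k-n) d_n (k >= n+1) on C[t]_{alpha,h,a}.\<close>
definition bact :: "nat \<Rightarrow> complex \<Rightarrow> complex \<Rightarrow> complex poly \<Rightarrow> (nat \<Rightarrow> complex)
    \<Rightarrow> nat \<Rightarrow> complex poly \<Rightarrow> complex poly" where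
  "bact n lam \<alpha> h a k f =
     smult ((of_nat k - of_nat n) * lam ^ k)
       (opG \<alpha> h f - smult ((of_nat k + of_nat n) * \<alpha>) (opF \<alpha> h f))
     + smult (coef_ext n a k - lam ^ (k - n) * coef_ext n a n) f"

text \<open>Submodules: complex subspaces of C[t] stable under all of b_{lambda,n+1};
  since b_{lambda,n+1} is spanned by the elements d_k - lambda^(k-n) d_n, k >= n+1,
  stability under these spanning elements is stability under b_{lambda,n+1}.\<close>
definition b_submodule :: "nat \<Rightarrow> complex \<Rightarrow> complex \<Rightarrow> complex poly \<Rightarrow> (nat \<Rightarrow> complex)
    \<Rightarrow> complex poly set \<Rightarrow> bool" where
  "b_submodule n lam \<alpha> h a W \<longleftrightarrow>
     0 \<in> W \<and> (\<forall>f\<in>W. \<forall>g\<in>W. f + g \<in> W) \<and> (\<forall>c. \<forall>f\<in>W. smult c f \<in> W) \<and>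
     (\<forall>k \<ge> n + 1. \<forall>f\<in>W. bact n lam \<alpha> h a k f \<in> W)"

definition b_irreducible :: "nat \<Rightarrow> complex \<Rightarrow> complex \<Rightarrow> complex poly \<Rightarrow> (nat \<Rightarrow> complex) \<Rightarrow> bool" where
  "b_irreducible n lam \<alpha> h a \<longleftrightarrow>
     (UNIV :: complex poly set) \<noteq> {0} \<and>
     (\<forall>W. b_submodule n lam \<alpha> h a W \<longrightarrow> W = {0} \<or> W = UNIV)"

end

theory Submission
  imports Defs
begin

lemma bact_big:
  assumes "k > 2*n"
  shows "bact n lam \<alpha> h a k f =
    smult ((of_nat k - of_nat n) * lam ^ k) (opG \<alpha> h f)
    - smult ((of_nat k - of_nat n) * (of_nat k + of_nat n) * \<alpha> * lam ^ k) (opF \<alpha> h f)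
    - smult (lam ^ (k - n) * a n) f"
  using assms unfolding bact_def coef_ext_def
  by (simp add: smult_diff_right algebra_simps)

lemma extractF:
  assumes "lam \<noteq> 0" "\<alpha> \<noteq> 0"
  shows "opF \<alpha> h f = smult (-1/(2*\<alpha>)) (
     smult (1/lam^(2*n+1)) (bact n lam \<alpha> h a (2*n+1) f)
   - smult (2/lam^(2*n+2)) (bact n lam \<alpha> h a (2*n+2) f)
   + smult (1/lam^(2*n+3)) (bact n lam \<alpha> h a (2*n+3) f))"
proof -
  have e: "\<And>j. lam ^ (2*n+j - n) = lam^(n+j)" by (simp add: mult_2)
  have p: "\<And>j. lam ^ (n+j) = lam^n * lam^j" "\<And>j. lam ^ (2*n+j) = lam^n * lam^n * lam^j"
    by (simp_all add: power_add mult_2)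
  show ?thesis
    apply (subst (1 2 3) bact_big, simp_all)
    apply (rule poly_eqI)
    apply (simp add: e p del: One_nat_def)
    using assms apply (simp add: field_simps)
    apply (simp add: mult_2_right power_add)
    done
qed

lemma extractG:
  assumes "lam \<noteq> 0"
  shows "smult (of_nat n + 1) (opG \<alpha> h f) = smult (1/lam^(2*n+1)) (bact n lam \<alpha> h a (2*n+1) f)
       + smult (lam ^ (n+1) * a n / lam^(2*n+1)) f
       + smult ((of_nat n + 1)*(3*of_nat n+1)*\<alpha>) (opF \<alpha> h f)"
proof -
  have e: "lam ^ (2*n+1 - n) = lam^(n+1)" by (simp add: mult_2)
  have nz: "(1 + of_nat n :: complex) \<noteq> 0" by (metis of_nat_Suc of_nat_eq_0_iff nat.distinct(1))
  have nz2: "lam ^ (n*2) \<noteq> 0" using assms by simp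
  show ?thesis
    apply (subst bact_big, simp)
    apply (rule poly_eqI)
    apply (simp add: e del: One_nat_def)
    using assms nz nz2 apply (simp add: field_simps)
    done
qed

lemma opF_alt: "opF \<alpha> h f = ((h - [:poly h \<alpha>:]) div [:-\<alpha>, 1:]) * f - pderiv f"
  by (simp add: opF_def)

lemma opF_add: "opF \<alpha> h (f + g) = opF \<alpha> h f + opF \<alpha> h g"
  by (simp add: opF_def pderiv_add algebra_simps)

lemma opF_diff: "opF \<alpha> h (f - g) = opF \<alpha> h f - opF \<alpha> h g"
  by (simp add: opF_def pderiv_diff algebra_simps)

lemma opF_smult: "opF \<alpha> h (smult c f) = smult c (opF \<alpha> h f)"
  unfolding opF_def by (simp add: pderiv_smult smult_diff_right)

lemma opF_zero: "opF \<alpha> h 0 = 0"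
  by (simp add: opF_def)

lemma x_comm: "[:0,1:] * opF \<alpha> h f = opF \<alpha> h ([:0,1:] * f) + f"
  by (simp add: opF_def pderiv_mult pderiv_pCons algebra_simps)

lemma deg_sub_const:
  fixes h :: "complex poly"
  assumes "degree h \<ge> 1"
  shows "degree (h - [:c:]) = degree h"
proof (rule antisym)
  show "degree (h - [:c:]) \<le> degree h" by (rule degree_diff_le) auto
  have "coeff (h - [:c:]) (degree h) = lead_coeff h" using assms by (simp add: coeff_pCons split: nat.split)
  moreover have "lead_coeff h \<noteq> 0" using assms by auto
  ultimately show "degree h \<le> degree (h - [:c:])" by (metis le_degree)
qed

lemma q_props:
  fixes h :: "complex poly"
  assumes "degree h \<ge> 1"
  shows "(h - [:poly h \<alpha>:]) div [:-\<alpha>, 1:] \<noteq> 0 \<and> degree ((h - [:poly h \<alpha>:]) div [:-\<alpha>, 1:]) = degree h - 1"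
proof -
  define p where "p = h - [:poly h \<alpha>:]"
  define q where "q = p div [:-\<alpha>, 1:]"
  have dp: "degree p = degree h" unfolding p_def using deg_sub_const[OF assms] .
  have "poly p \<alpha> = 0" by (simp add: p_def)
  hence "[:-\<alpha>,1:] dvd p" by (simp add: poly_eq_0_iff_dvd)
  hence pq: "[:-\<alpha>,1:] * q = p" unfolding q_def by (rule dvd_mult_div_cancel)
  have p0: "p \<noteq> 0" using dp assms by auto
  hence q0: "q \<noteq> 0" using pq by auto
  have "degree p = degree [:-\<alpha>,1:] + degree q" unfolding pq[symmetric] by (rule degree_mult_eq) (simp_all add: q0)
  hence "degree p = 1 + degree q" by simp
  thus ?thesis using q0 dp by (simp add: p_def[symmetric] q_def[symmetric])
qed

lemma deg1_F:
  fixes h :: "complex poly"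
  assumes "degree h = 1"
  obtains c where "c \<noteq> 0" "\<And>f. opF \<alpha> h f = smult c f - pderiv f"
proof -
  define q where "q = (h - [:poly h \<alpha>:]) div [:-\<alpha>, 1:]"
  have "q \<noteq> 0" "degree q = 0" using q_props[of h \<alpha>] assms by (simp_all add: q_def)
  hence "q = [:coeff q 0:]" "coeff q 0 \<noteq> 0" by (metis degree_0_id, metis degree_0_id pCons_eq_0_iff)
  moreover have "\<And>f. opF \<alpha> h f = smult (coeff q 0) f - pderiv f"
  proof -
    fix f
    have "opF \<alpha> h f = q * f - pderiv f" by (simp add: opF_def q_def)
    also have "q * f = [:coeff q 0:] * f" using \<open>q = [:coeff q 0:]\<close> by simp
    finally show "opF \<alpha> h f = smult (coeff q 0) f - pderiv f" by simp
  qed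
  ultimately show ?thesis using that[of "coeff q 0"] by blast
qed

context
  fixes n lam \<alpha> h a W
  assumes sm: "b_submodule n lam \<alpha> h a W"
begin

lemma sm_zero: "0 \<in> W" using sm by (simp add: b_submodule_def)
lemma sm_add: "f \<in> W \<Longrightarrow> g \<in> W \<Longrightarrow> f + g \<in> W" using sm by (simp add: b_submodule_def)
lemma sm_smult: "f \<in> W \<Longrightarrow> smult c f \<in> W" using sm by (simp add: b_submodule_def)
lemma sm_diff: "f \<in> W \<Longrightarrow> g \<in> W \<Longrightarrow> f - g \<in> W"
proof -
  assume "f \<in> W" "g \<in> W"
  have "f - g = f + smult (-1) g" by simp
  moreover have "f + smult (-1) g \<in> W" by (rule sm_add[OF \<open>f \<in> W\<close> sm_smult[OF \<open>g \<in> W\<close>]])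
  ultimately show "f - g \<in> W" by simp
qed
lemma sm_bact: "k \<ge> n + 1 \<Longrightarrow> f \<in> W \<Longrightarrow> bact n lam \<alpha> h a k f \<in> W"
  using sm by (simp add: b_submodule_def)

lemma sm_sum: "finite S \<Longrightarrow> (\<And>i. i \<in> S \<Longrightarrow> g i \<in> W) \<Longrightarrow> sum g S \<in> W"
  by (induction S rule: finite_induct) (auto intro: sm_zero sm_add)

lemma sm_F: assumes "lam \<noteq> 0" "\<alpha> \<noteq> 0" "f \<in> W" shows "opF \<alpha> h f \<in> W"
  apply (subst extractF[OF assms(1,2), of h f n a])
  by (intro sm_smult sm_add sm_diff sm_bact assms(3)) auto

lemma sm_G: assumes "lam \<noteq> 0" "\<alpha> \<noteq> 0" "f \<in> W" shows "opG \<alpha> h f \<in> W"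
proof -
  have s1: "smult (of_nat n + 1) (opG \<alpha> h f) \<in> W"
    apply (subst extractG[OF assms(1), of n \<alpha> h f a])
    by (intro sm_smult sm_add sm_diff sm_bact assms(3) sm_F assms) auto
  have "(of_nat n + 1 :: complex) = of_nat (n + 1)" by simp
  hence nz: "(of_nat n + 1 :: complex) \<noteq> 0" by (simp only: of_nat_eq_0_iff)
  from sm_smult[OF s1, of "1/(of_nat n + 1)"] nz show ?thesis by simp
qed

lemma sm_xF: assumes "lam \<noteq> 0" "\<alpha> \<noteq> 0" "f \<in> W" shows "[:0,1:] * opF \<alpha> h f \<in> W"
proof -
  have "[:0,1:] * opF \<alpha> h f = opG \<alpha> h f - smult (poly h \<alpha>) f" by (simp add: opG_def)
  thus ?thesis using sm_G[OF assms] sm_smult[OF assms(3)] sm_diff by simp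
qed

end

lemma x_pderiv_monom: "[:0,1:] * pderiv (monom (1::complex) m) = smult (of_nat m) (monom 1 m)"
proof (cases m)
  case (Suc k)
  have "pderiv (monom (1::complex) m) = monom (of_nat m) k" by (simp only: pderiv_monom Suc) simp
  thus ?thesis by (simp add: smult_monom monom_Suc Suc)
qed (simp add: pderiv_monom)

lemma suff:
  assumes lam: "lam \<noteq> 0" and al: "\<alpha> \<noteq> 0" and dh: "degree h = 1"
    and sm: "b_submodule n lam \<alpha> h a W" and ne: "W \<noteq> {0}"
  shows "W = UNIV"
proof -
  obtain c where c: "c \<noteq> 0" "\<And>f. opF \<alpha> h f = smult c f - pderiv f" using deg1_F[OF dh] by blast
  have pd: "pderiv f \<in> W" if "f \<in> W" for f
  proof -
    have "pderiv f = smult c f - opF \<alpha> h f" by (simp add: c)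
    thus ?thesis using sm_diff[OF sm] sm_smult[OF sm] sm_F[OF sm lam al] that by simp
  qed
  have one: "1 \<in> W" if "f \<in> W" "f \<noteq> 0" for f
    using that
  proof (induction "degree f" arbitrary: f rule: less_induct)
    case less
    show ?case
    proof (cases "degree f = 0")
      case True
      then have f: "f = [:coeff f 0:]" by (metis degree_0_id)
      with less have "coeff f 0 \<noteq> 0" by (metis pCons_eq_0_iff)
      moreover have "smult (1 / coeff f 0) f \<in> W" using sm_smult[OF sm less(2)] .
      moreover have "smult (1 / coeff f 0) [:coeff f 0:] = 1" using calculation(1) by (simp add: one_pCons)
      ultimately show ?thesis using f by metis
    next
      case False
      have "pderiv f \<noteq> 0" using False by (simp add: pderiv_eq_0_iff)
      moreover have "degree (pderiv f) < degree f" using False by (simp add: degree_pderiv)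
      ultimately show ?thesis using less pd by blast
    qed
  qed
  obtain f where "f \<in> W" "f \<noteq> 0" using ne sm_zero[OF sm] by blast
  hence o: "1 \<in> W" using one by blast
  have mon: "monom 1 m \<in> W" for m
  proof (induction m)
    case 0 then show ?case using o by (simp add: monom_0 one_pCons)
  next
    case (Suc m)
    have "[:0,1:] * opF \<alpha> h (monom 1 m) = smult c ([:0,1:] * monom 1 m) - smult (of_nat m) (monom 1 m)"
      by (simp only: c right_diff_distrib x_pderiv_monom mult_smult_right)
    also have "[:0,1:] * monom (1::complex) m = monom 1 (Suc m)" by (simp add: monom_Suc)
    finally have "[:0,1:] * opF \<alpha> h (monom 1 m) = smult c (monom 1 (Suc m)) - smult (of_nat m) (monom 1 m)" .
    hence "monom 1 (Suc m) = smult (1/c) ([:0,1:] * opF \<alpha> h (monom 1 m) + smult (of_nat m) (monom 1 m))"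
      using c(1) by simp
    moreover have "[:0,1:] * opF \<alpha> h (monom 1 m) + smult (of_nat m) (monom 1 m) \<in> W"
      using sm_add[OF sm sm_xF[OF sm lam al Suc] sm_smult[OF sm Suc]] .
    ultimately show ?case using sm_smult[OF sm] by simp
  qed
  have "p \<in> W" for p
  proof -
    have "p = (\<Sum>i\<le>degree p. smult (coeff p i) (monom 1 i))"
      by (simp add: smult_monom poly_as_sum_of_monoms)
    moreover have S: "(\<Sum>i\<le>degree p. smult (coeff p i) (monom 1 i)) \<in> W"
      by (rule sm_sum[OF sm]) (simp_all add: sm_smult[OF sm mon])
    ultimately show ?thesis by simp
  qed
  thus ?thesis by auto
qed

lemma opF_pCons_smult: "opF \<alpha> h (pCons 0 (smult c p)) = smult c (opF \<alpha> h (pCons 0 p))"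
proof -
  have "pCons 0 (smult c p) = smult c (pCons 0 p)" by simp
  thus ?thesis by (simp only: opF_smult)
qed

lemma bact_F: "bact n lam \<alpha> h a k (opF \<alpha> h g) =
  opF \<alpha> h (smult ((of_nat k - of_nat n) * lam ^ k)
     (smult (poly h \<alpha>) g + [:0,1:] * opF \<alpha> h g + g - smult ((of_nat k + of_nat n) * \<alpha>) (opF \<alpha> h g))
   + smult (coef_ext n a k - lam ^ (k - n) * coef_ext n a n) g)"
proof -
  have e: "[:0,1:] * opF \<alpha> h (opF \<alpha> h g) = opF \<alpha> h ([:0,1:] * opF \<alpha> h g) + opF \<alpha> h g"
    by (rule x_comm)
  show ?thesis unfolding bact_def opG_def e
    by (simp add: opF_add opF_diff opF_smult smult_add_right smult_diff_right opF_pCons_smult)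
qed

lemma necc:
  assumes irr: "b_irreducible n lam \<alpha> h a"
  shows "\<alpha> \<noteq> 0 \<and> degree h = 1"
proof -
  have irr': "\<And>W. b_submodule n lam \<alpha> h a W \<Longrightarrow> W = {0} \<or> W = UNIV"
    using irr by (simp add: b_irreducible_def)
  have a0: "\<alpha> \<noteq> 0"
  proof
    assume z: "\<alpha> = 0"
    define W where "W = {f :: complex poly. poly f 0 = 0}"
    have "b_submodule n lam \<alpha> h a W"
      unfolding b_submodule_def W_def using z by (simp add: bact_def opG_def)
    moreover have "[:0,1:] \<in> W" "[:0,1:] \<noteq> (0::complex poly)" "(1::complex poly) \<notin> W" by (simp_all add: W_def)
    ultimately show False using irr' by blast
  qed
  have "degree h = 1"
  proof (rule ccontr)
    assume d: "degree h \<noteq> 1"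
    show False
    proof (cases "degree h = 0")
      case True
      then have hc: "h = [:poly h \<alpha>:]" by (metis degree_0_id poly_pCons mult_zero_right add_0_right poly_0)
      define W where "W = {f :: complex poly. degree f = 0}"
      have hz: "h - [:poly h \<alpha>:] = 0" using hc by simp
      have F0: "opF \<alpha> h f = 0" if "f \<in> W" for f
      proof -
        have "pderiv f = 0" using that by (simp add: W_def pderiv_eq_0_iff)
        thus ?thesis by (simp add: opF_def hz)
      qed
      have "b_submodule n lam \<alpha> h a W"
        unfolding b_submodule_def
      proof (intro conjI ballI allI impI)
        show "0 \<in> W" by (simp add: W_def)
        fix f g assume "f \<in> W" "g \<in> W" thus "f + g \<in> W" unfolding W_def
          by (metis (mono_tags) degree_add_le le_zero_eq mem_Collect_eq)
      next
        fix c f assume "f \<in> W" thus "smult c f \<in> W" by (simp add: W_def)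
      next
        fix k f assume "f \<in> W"
        thus "bact n lam \<alpha> h a k f \<in> W" using F0[of f]
          by (simp add: bact_def opG_def W_def)
            (metis (mono_tags) degree_add_le degree_smult_le le_zero_eq)
      qed
      moreover have "[:0,1:] \<notin> W" "1 \<in> W" "(1::complex poly) \<noteq> 0" by (simp_all add: W_def)
      ultimately show False using irr' by blast
    next
      case False
      hence d2: "degree h \<ge> 2" using d by linarith
      define q where "q = (h - [:poly h \<alpha>:]) div [:-\<alpha>, 1:]"
      have q: "q \<noteq> 0" "degree q \<ge> 1" using q_props[of h \<alpha>] d2 by (simp_all add: q_def)
      define W where "W = range (opF \<alpha> h)"
      have "b_submodule n lam \<alpha> h a W"
        unfolding b_submodule_def
      proof (intro conjI ballI allI impI)
        show "0 \<in> W" unfolding W_def by (rule range_eqI[of _ _ 0]) (simp add: opF_zero)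
        fix f g assume "f \<in> W" "g \<in> W"
        then obtain f1 g1 where "f = opF \<alpha> h f1" "g = opF \<alpha> h g1" by (auto simp: W_def)
        thus "f + g \<in> W" unfolding W_def by (simp add: opF_add[symmetric])
      next
        fix c f assume "f \<in> W"
        then obtain f1 where "f = opF \<alpha> h f1" by (auto simp: W_def)
        thus "smult c f \<in> W" unfolding W_def by (simp add: opF_smult[symmetric])
      next
        fix k f assume "f \<in> W"
        then obtain f1 where "f = opF \<alpha> h f1" by (auto simp: W_def)
        thus "bact n lam \<alpha> h a k f \<in> W" unfolding W_def by (simp only: bact_F rangeI)
      qed
      moreover have "opF \<alpha> h 1 \<noteq> 0" using q by (simp add: opF_def q_def[symmetric])
      moreover have "(1::complex poly) \<notin> W"
      proof
        assume "1 \<in> W"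
        then obtain g where g: "opF \<alpha> h g = 1" by (auto simp: W_def)
        hence g0: "g \<noteq> 0" by (auto simp: opF_zero)
        have "degree (q * g) = degree q + degree g" using q g0 by (simp add: degree_mult_eq)
        moreover have "degree (pderiv g) < degree (q * g)" using q calculation
          by (simp add: degree_pderiv)
        ultimately have "degree (q * g - pderiv g) = degree q + degree g"
          by (metis degree_add_eq_left degree_minus diff_conv_add_uminus)
        moreover have "q * g - pderiv g = 1" using g by (simp add: opF_def q_def)
        ultimately show False using q by simp
      qed
      moreover have "opF \<alpha> h 1 \<in> W" by (simp add: W_def)
      ultimately have "W \<noteq> {0}" "W \<noteq> UNIV" by auto
      with irr' \<open>b_submodule n lam \<alpha> h a W\<close> show False by blast
    qed
  qed
  thus ?thesis using a0 by simp
qed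

theorem proposition5p1:
  fixes n :: nat and a :: "nat \<Rightarrow> complex" and lam \<alpha> :: complex and h :: "complex poly"
  assumes "n \<ge> 1" and "lam \<noteq> 0"
  shows "b_irreducible n lam \<alpha> h a \<longleftrightarrow> (\<alpha> \<noteq> 0 \<and> degree h = 1)"
proof
  assume "b_irreducible n lam \<alpha> h a" thus "\<alpha> \<noteq> 0 \<and> degree h = 1" by (rule necc)
next
  assume "\<alpha> \<noteq> 0 \<and> degree h = 1"
  hence al: "\<alpha> \<noteq> 0" and dh: "degree h = 1" by auto
  show "b_irreducible n lam \<alpha> h a"
    unfolding b_irreducible_def
  proof (intro conjI allI impI)
    have "(1::complex poly) \<notin> {0}" by simp
    thus "(UNIV :: complex poly set) \<noteq> {0}" by blast
  next
    fix W assume "b_submodule n lam \<alpha> h a W"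
    thus "W = {0} \<or> W = UNIV" using suff[OF assms(2) al dh] by blast
  qed
qed

end
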